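(* Let $v=s_{\mathbf i}s_{\mathbf j}^*\in\mathrm{Cu}_2\setminus\{\lozenge\}$ and let $f\in\mathcal A$ have zero sums at $v$, i.e. $\sum_{l=0}^\infty f(s_{\mathbf i\mathbf n_l}s_{\mathbf j\mathbf n_l}^* )=0$ for every $\mathbf n\in\mathbf L$. Then $h:=\sum_{t\in S_v}f(t)\delta_t$ belongs to $\mathcal J$.
   Context: Let $\mathrm{Cu}_2$ be the involutive monoid with identity $e$ and zero element $\lozenge$ (so $\lozenge t=\lozenge=t\lozenge$ for all $t$), generated by $s_1,s_2,s_1^*,s_2^*$ subject to $s_1^*s_1=e=s_2^*s_2$ and $s_1^*s_2=\lozenge=s_2^*s_1$, with involution $t\mapsto t^*$ satisfying $(t^* )^*=t$, $(tu)^*=u^*t^*$. Let $\mathbf I_0=\{\emptyset\}$, $\mathbf I_n=\{1,2\}^n$, $\mathbf I=\bigcup_{n\ge0}\mathbf I_n$ (finite words; concatenation written $\mathbf{ij}$), and $\mathbf L=\{1,2\}^{\mathbb N}$; for $\mathbf n=(n_1,n_2,\dots)\in\mathbf L$ put $\mathbf n_0=\emptyset$, $\mathbf n_l=(n_1,\dots,n_l)$. For $\mathbf i=(i_1,\dots,i_k)\in\mathbf I$ put $s_{\mathbf i}=s_{i_1}\cdots s_{i_k}$ ($s_\emptyset=e$) and $s_{\mathbf i}^*=(s_{\mathbf i})^*$. Every $t\in\mathrm{Cu}_2\setminus\{\lozenge\}$ can be written uniquely as $t=s_{\mathbf i}s_{\mathbf j}^*$ with $\mathbf i,\mathbf j\in\mathbf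 I$. Let $\mathcal A=\ell^1(\mathrm{Cu}_2\setminus\{\lozenge\})$ with product $\#$ determined by bilinearity and continuity from $\delta_s\#\delta_t=\delta_{st}$ if $st\neq\lozenge$ and $\delta_s\#\delta_t=0$ if $st=\lozenge$; this is a unital Banach $*$-algebra with unit $\delta_e$ and isometric involution $f^*(s)=\overline{f(s^* )}$. Let $f_0=\delta_e-\delta_{s_1s_1^*}-\delta_{s_2s_2^*}$ and let $\mathcal J$ be the closed two-sided ideal of $\mathcal A$ generated by $f_0$. For $v=s_{\mathbf i}s_{\mathbf j}^*$, $S_v=\{s_{\mathbf{ik}}s_{\mathbf{jk}}^*:\mathbf k\in\mathbf I\}$ is the set of symmetric expansions of $v$. *)

theory Defs
  imports "HOL-Analysis.Analysis"
begin

datatype gen = G1 | G2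

text \<open>A nonzero element of Cu_2 is written uniquely as s_i s_j^*; we represent it
  by the pair of words (i, j). The zero element is represented by None.\<close>
type_synonym cu = "gen list \<times> gen list"

definition cu_mult :: "cu \<Rightarrow> cu \<Rightarrow> cu option" where
  "cu_mult x y = (case x of (i, j) \<Rightarrow> case y of (k, l) \<Rightarrow>
     if (\<exists>k'. k = j @ k') then Some (i @ drop (length j) k, l)
     else if (\<exists>j'. j = k @ j') then Some (i, l @ drop (length k) j)
     else None)"

definition cu_star :: "cu \<Rightarrow> cu" where
  "cu_star x = (snd x, fst x)"

definition cu_e :: cu where "cu_e = ([], [])"

definition in_A :: "(cu \<Rightarrow> complex) \<Rightarrow> bool" where
  "in_A f \<longleftrightarrow> (\<lambda>t. norm (f t)) summable_on UNIV"

definition l1norm :: "(cu \<Rightarrow> complex) \<Rightarrow> real" where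
  "l1norm f = (\<Sum>\<^sub>\<infinity>t. norm (f t))"

definition conv :: "(cu \<Rightarrow> complex) \<Rightarrow> (cu \<Rightarrow> complex) \<Rightarrow> (cu \<Rightarrow> complex)" (infixl "#" 70) where
  "(f # g) t = (\<Sum>\<^sub>\<infinity>p\<in>{(s, u). cu_mult s u = Some t}. f (fst p) * g (snd p))"

definition delta :: "cu \<Rightarrow> cu \<Rightarrow> complex" where
  "delta s = (\<lambda>t. if t = s then 1 else 0)"

definition f0 :: "cu \<Rightarrow> complex" where
  "f0 = (\<lambda>t. delta cu_e t - delta ([G1], [G1]) t - delta ([G2], [G2]) t)"

definition closed_ideal :: "(cu \<Rightarrow> complex) set \<Rightarrow> bool" where
  "closed_ideal I \<longleftrightarrow>
     I \<subseteq> {f. in_A f} \<and>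
     (\<lambda>_. 0) \<in> I \<and>
     (\<forall>f\<in>I. \<forall>g\<in>I. (\<lambda>t. f t + g t) \<in> I) \<and>
     (\<forall>c. \<forall>f\<in>I. (\<lambda>t. c * f t) \<in> I) \<and>
     (\<forall>a. \<forall>f\<in>I. in_A a \<longrightarrow> a # f \<in> I \<and> f # a \<in> I) \<and>
     (\<forall>g. in_A g \<longrightarrow> (\<forall>\<epsilon>>0. \<exists>h\<in>I. l1norm (\<lambda>t. g t - h t) < \<epsilon>) \<longrightarrow> g \<in> I)"

definition J :: "(cu \<Rightarrow> complex) set" where
  "J = \<Inter> {I. closed_ideal I \<and> f0 \<in> I}"

definition sym_exp :: "cu \<Rightarrow> cu set" where
  "sym_exp v = {(fst v @ k, snd v @ k) | k. True}"

text \<open>Prefix n_l = (n_1,...,n_l) of an infinite word n.\<close>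
definition pref :: "(nat \<Rightarrow> gen) \<Rightarrow> nat \<Rightarrow> gen list" where
  "pref n l = map n [0..<l]"

definition zero_sums_at :: "(cu \<Rightarrow> complex) \<Rightarrow> cu \<Rightarrow> bool" where
  "zero_sums_at f v \<longleftrightarrow>
     (\<forall>n :: nat \<Rightarrow> gen. (\<lambda>l. f (fst v @ pref n l, snd v @ pref n l)) sums 0)"

end

theory Submission
  imports Defs
begin

lemma cu_mult_left: "cu_mult (a, []) (x, y) = Some (a @ x, y)"
  by (simp add: cu_mult_def)

lemma cu_mult_right: "cu_mult (x, y) ([], b) = Some (x, b @ y)"
  by (auto simp add: cu_mult_def)

lemma conv_delta_left:
  "(conv (delta (a, [])) u) t =
     (if take (length a) (fst t) = a then u (drop (length a) (fst t), snd t) else 0)"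
proof -
  obtain x y where t: "t = (x, y)" by (cases t)
  let ?S = "{(s, w). cu_mult s w = Some t}"
  let ?T = "if take (length a) x = a then {((a, []), (drop (length a) x, y))} else {}"
  have "(conv (delta (a, [])) u) t = (\<Sum>\<^sub>\<infinity>p\<in>?S. delta (a, []) (fst p) * u (snd p))"
    by (simp add: conv_def)
  also have "\<dots> = (\<Sum>\<^sub>\<infinity>p\<in>?T. delta (a, []) (fst p) * u (snd p))"
  proof (rule infsum_cong_neutral)
    fix p assume "p \<in> ?T - ?S" then show "delta (a, []) (fst p) * u (snd p) = 0"
      by (auto simp: t cu_mult_left split: if_splits)
         (metis append_take_drop_id)
  next
    fix p assume p: "p \<in> ?S - ?T"
    obtain s w where pw: "p = (s, w)" by (cases p)
    show "delta (a, []) (fst p) * u (snd p) = 0"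
    proof (cases "s = (a, [])")
      case True
      obtain w1 w2 where "w = (w1, w2)" by (cases w)
      with p pw True show ?thesis by (auto simp: t cu_mult_left split: if_splits)
    qed (simp add: pw delta_def)
  next
    fix p assume "p \<in> ?S \<inter> ?T" then show "delta (a, []) (fst p) * u (snd p) = delta (a, []) (fst p) * u (snd p)" by simp
  qed
  also have "\<dots> = (if take (length a) (fst t) = a then u (drop (length a) (fst t), snd t) else 0)"
    by (simp add: t delta_def)
  finally show ?thesis .
qed

lemma conv_delta_right:
  "(conv u (delta ([], b))) t =
     (if take (length b) (snd t) = b then u (fst t, drop (length b) (snd t)) else 0)"
proof -
  obtain x y where t: "t = (x, y)" by (cases t)
  let ?S = "{(s, w). cu_mult s w = Some t}"
  let ?T = "if take (length b) y = b then {((x, drop (length b) y), ([], b))} else {}"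
  have "(conv u (delta ([], b))) t = (\<Sum>\<^sub>\<infinity>p\<in>?S. u (fst p) * delta ([], b) (snd p))"
    by (simp add: conv_def)
  also have "\<dots> = (\<Sum>\<^sub>\<infinity>p\<in>?T. u (fst p) * delta ([], b) (snd p))"
  proof (rule infsum_cong_neutral)
    fix p assume "p \<in> ?T - ?S" then show "u (fst p) * delta ([], b) (snd p) = 0"
      by (auto simp: t cu_mult_right split: if_splits)
         (metis append_take_drop_id)
  next
    fix p assume p: "p \<in> ?S - ?T"
    obtain s w where pw: "p = (s, w)" by (cases p)
    show "u (fst p) * delta ([], b) (snd p) = 0"
    proof (cases "w = ([], b)")
      case True
      obtain s1 s2 where "s = (s1, s2)" by (cases s)
      with p pw True show ?thesis by (auto simp: t cu_mult_right split: if_splits)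
    qed (simp add: pw delta_def)
  next
    fix p assume "p \<in> ?S \<inter> ?T" then show "u (fst p) * delta ([], b) (snd p) = u (fst p) * delta ([], b) (snd p)" by simp
  qed
  also have "\<dots> = (if take (length b) (snd t) = b then u (fst t, drop (length b) (snd t)) else 0)"
    by (simp add: t delta_def)
  finally show ?thesis .
qed

lemma in_A_delta: "in_A (delta s)"
  unfolding in_A_def
proof -
  have "(\<lambda>t. norm (delta s t)) summable_on UNIV \<longleftrightarrow> (\<lambda>t. norm (delta s t)) summable_on {s}"
    by (rule summable_on_cong_neutral) (auto simp: delta_def)
  then show "(\<lambda>t. norm (delta s t)) summable_on UNIV" by simp
qed

lemma take_eq_iff: "(take (length a) x = a) \<longleftrightarrow> (\<exists>x'. x = a @ x')"
  by (metis append_eq_conv_conj append_take_drop_id)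

lemma ideal_zero: "closed_ideal I \<Longrightarrow> (\<lambda>_. 0) \<in> I"
  unfolding closed_ideal_def by (elim conjE)

lemma ideal_add: "closed_ideal I \<Longrightarrow> f \<in> I \<Longrightarrow> g \<in> I \<Longrightarrow> (\<lambda>t. f t + g t) \<in> I"
  unfolding closed_ideal_def by (elim conjE) (erule ballE, erule ballE, assumption, auto)

lemma ideal_smult: "closed_ideal I \<Longrightarrow> f \<in> I \<Longrightarrow> (\<lambda>t. c * f t) \<in> I"
  unfolding closed_ideal_def by (elim conjE) (erule allE[of _ c], erule ballE, assumption, auto)

lemma ideal_mul: "closed_ideal I \<Longrightarrow> v \<in> I \<Longrightarrow> in_A u \<Longrightarrow> conv u v \<in> I \<and> conv v u \<in> I"
  unfolding closed_ideal_def by (elim conjE) (erule allE[of _ u], erule ballE, erule mp, assumption, auto)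

lemma ideal_closed: "closed_ideal I \<Longrightarrow> in_A g \<Longrightarrow> (\<And>e. e > 0 \<Longrightarrow> \<exists>h\<in>I. l1norm (\<lambda>t. g t - h t) < e) \<Longrightarrow> g \<in> I"
  unfolding closed_ideal_def by (elim conjE) (erule allE[of _ g], erule impE, assumption, erule impE, blast, assumption)

lemma g_in_ideal:
  assumes I: "closed_ideal I" and f0I: "f0 \<in> I"
  shows "(\<lambda>t. delta (a, b) t - delta (a @ [G1], b @ [G1]) t - delta (a @ [G2], b @ [G2]) t) \<in> I"
proof -
  have mul: "\<And>u v. in_A u \<Longrightarrow> v \<in> I \<Longrightarrow> conv u v \<in> I \<and> conv v u \<in> I"
    using I ideal_mul by blast
  have "conv (conv (delta (a, [])) f0) (delta ([], b)) \<in> I"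
    using mul[OF in_A_delta f0I] mul[OF in_A_delta] by blast
  moreover have "conv (conv (delta (a, [])) f0) (delta ([], b)) =
     (\<lambda>t. delta (a, b) t - delta (a @ [G1], b @ [G1]) t - delta (a @ [G2], b @ [G2]) t)"
  proof
    fix t :: cu
    obtain x y where t: "t = (x, y)" by (cases t)
    show "(conv (conv (delta (a, [])) f0) (delta ([], b))) t =
       delta (a, b) t - delta (a @ [G1], b @ [G1]) t - delta (a @ [G2], b @ [G2]) t"
    proof (cases "\<exists>x'. x = a @ x'")
      case True
      then obtain x' where x: "x = a @ x'" by blast
      show ?thesis
      proof (cases "\<exists>y'. y = b @ y'")
        case True
        then obtain y' where y: "y = b @ y'" by blast
        show ?thesis
          unfolding conv_delta_right conv_delta_left by (simp add: t x y f0_def delta_def cu_e_def)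
      next
        case False
        then show ?thesis
          unfolding conv_delta_right conv_delta_left by (auto simp add: t x f0_def delta_def take_eq_iff)
      qed
    next
      case False
      then show ?thesis
        unfolding conv_delta_right conv_delta_left by (auto simp add: t f0_def delta_def take_eq_iff)
    qed
  qed
  ultimately show ?thesis by simp
qed

lemma ideal_sum:
  assumes I: "closed_ideal I" and K: "finite K" and G: "\<And>k. k \<in> K \<Longrightarrow> G k \<in> I"
  shows "(\<lambda>t. \<Sum>k\<in>K. c k * G k t) \<in> I"
  using K G
proof (induction K rule: finite_induct)
  case empty
  then show ?case using I by (simp add: closed_ideal_def)
next
  case (insert x F)
  have a: "(\<lambda>t. c x * G x t) \<in> I" using I insert.prems by (simp add: ideal_smult)
  have b: "(\<lambda>t. \<Sum>k\<in>F. c k * G k t) \<in> I" using insert by simp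
  have "(\<lambda>t. c x * G x t + (\<Sum>k\<in>F. c k * G k t)) \<in> I"
    using I a b by (rule ideal_add)
  then show ?case using insert.hyps by simp
qed

definition Pfun :: "(gen list \<Rightarrow> complex) \<Rightarrow> gen list \<Rightarrow> complex" where
  "Pfun F m = (\<Sum>l\<le>length m. F (take l m))"

definition extn :: "gen list \<Rightarrow> gen list set" where
  "extn m = {m @ w | w. w \<noteq> []}"

definition tailF :: "(gen list \<Rightarrow> complex) \<Rightarrow> nat \<Rightarrow> real" where
  "tailF F M = (\<Sum>\<^sub>\<infinity>w\<in>{w. M < length w}. norm (F w))"

lemma Pfun_Nil: "Pfun F [] = F []"
  by (simp add: Pfun_def)

lemma Pfun_snoc: "Pfun F (m @ [x]) = Pfun F m + F (m @ [x])"
proof -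
  have "Pfun F (m @ [x]) = (\<Sum>l\<le>length m. F (take l (m @ [x]))) + F (m @ [x])"
    by (simp add: Pfun_def)
  also have "(\<Sum>l\<le>length m. F (take l (m @ [x]))) = Pfun F m"
    unfolding Pfun_def by (rule sum.cong) auto
  finally show ?thesis .
qed

lemma UNIV_gen: "(UNIV :: gen set) = {G1, G2}"
  using gen.exhaust by auto

lemma finite_len_le: "finite {w :: gen list. length w \<le> M}"
proof -
  have "finite {w :: gen list. set w \<subseteq> UNIV \<and> length w \<le> M}"
    by (rule finite_lists_length_le) (simp add: UNIV_gen)
  then show ?thesis by simp
qed

lemma P_bound:
  fixes F :: "gen list \<Rightarrow> complex"
  assumes sa: "(\<lambda>w. norm (F w)) summable_on UNIV"
    and zs: "\<And>n. (\<lambda>l. F (pref n l)) sums 0"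
  shows "norm (Pfun F m) \<le> (\<Sum>\<^sub>\<infinity>w\<in>extn m. norm (F w))"
proof -
  define n where "n l = (if l < length m then m ! l else G1)" for l
  have pref_len: "length (pref n l) = l" for l by (simp add: pref_def)
  have inj: "inj (pref n)" by (metis injI pref_len)
  have pref_le: "pref n l = take l m" if "l \<le> length m" for l
    using that by (simp add: pref_def n_def list_eq_iff_nth_eq)
  have pref_gt: "pref n l \<in> extn m" if "length m < l" for l
  proof -
    have "[0..<l] = [0..<length m] @ [length m..<l]"
      using upt_add_eq_append[of 0 "length m" "l - length m"] that by simp
    then have e1: "pref n l = map n [0..<length m] @ map n [length m..<l]"
      by (simp add: pref_def)
    have e2: "map n [0..<length m] = m"
      by (rule nth_equalityI) (auto simp: n_def)
    have e3: "map n [length m..<l] \<noteq> []" using that by simp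
    have "pref n l = m @ map n [length m..<l]" using e1 e2 by simp
    then show ?thesis unfolding extn_def using e3 by blast
  qed
  define c where "c l = F (pref n l)" for l
  have nc: "(\<lambda>l. norm (c l)) summable_on UNIV"
  proof -
    have "(\<lambda>w. norm (F w)) summable_on range (pref n)"
      using sa by (rule summable_on_subset_banach) simp
    then show ?thesis using summable_on_reindex[of "pref n" UNIV "\<lambda>w. norm (F w)"] inj
      by (simp add: c_def comp_def)
  qed
  have nc_sub: "(\<lambda>l. norm (c l)) summable_on A" for A
    using nc by (rule summable_on_subset_banach) simp
  have cs: "c summable_on A" for A
    using nc_sub summable_on_iff_abs_summable_on_complex by blast
  have "(c has_sum infsum c UNIV) UNIV" using cs by (rule has_sum_infsum)
  then have "c sums infsum c UNIV" by (rule has_sum_imp_sums)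
  moreover have "c sums 0" using zs unfolding c_def by blast
  ultimately have c0: "infsum c UNIV = 0" using sums_unique2 by blast
  have un: "(UNIV :: nat set) = {..length m} \<union> {length m<..}" by auto
  have "infsum c UNIV = infsum c {..length m} + infsum c {length m<..}"
    unfolding un by (rule infsum_Un_disjoint) (auto intro: cs)
  moreover have "infsum c {..length m} = Pfun F m"
    by (simp add: Pfun_def c_def pref_le)
  ultimately have Pe: "Pfun F m = - infsum c {length m<..}" using c0
    by (simp add: eq_neg_iff_add_eq_0)
  have "norm (Pfun F m) = norm (infsum c {length m<..})" by (simp add: Pe)
  also have "\<dots> \<le> (\<Sum>\<^sub>\<infinity>l\<in>{length m<..}. norm (c l))"
    by (rule norm_infsum_bound) (rule nc_sub)
  also have "\<dots> = (\<Sum>\<^sub>\<infinity>w\<in>pref n ` {length m<..}. norm (F w))"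
    using infsum_reindex[OF inj_on_subset[OF inj subset_UNIV], of "\<lambda>w. norm (F w)" "{length m<..}"]
    by (simp add: c_def comp_def)
  also have "\<dots> \<le> (\<Sum>\<^sub>\<infinity>w\<in>extn m. norm (F w))"
    by (rule infsum_mono2) (auto intro: summable_on_subset_banach[OF sa] pref_gt)
  finally show ?thesis .
qed

lemma tail_small:
  fixes F :: "gen list \<Rightarrow> complex"
  assumes sa: "(\<lambda>w. norm (F w)) summable_on UNIV" and e: "e > 0"
  shows "\<exists>M. tailF F M < e"
proof -
  define a where "a = (\<lambda>w. norm (F w))"
  define S where "S = infsum a UNIV"
  have sa': "a summable_on UNIV" unfolding a_def using sa .
  have "(a has_sum S) UNIV" unfolding S_def a_def using sa by (rule has_sum_infsum)
  then have "(sum a \<longlongrightarrow> S) (finite_subsets_at_top UNIV)" by (simp add: has_sum_def)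
  then have "eventually (\<lambda>X. S - e < sum a X) (finite_subsets_at_top UNIV)"
    using e by (intro order_tendstoD(1)) auto
  then have "\<exists>X. finite X \<and> (\<forall>Y. finite Y \<and> X \<subseteq> Y \<longrightarrow> S - e < sum a Y)"
    unfolding eventually_finite_subsets_at_top by simp
  then obtain X where X: "finite X" "\<And>Y. finite Y \<Longrightarrow> X \<subseteq> Y \<Longrightarrow> S - e < sum a Y"
    by blast
  define M where "M = (\<Sum>x\<in>X. length x)"
  define Y where "Y = {w :: gen list. length w \<le> M}"
  have fY: "finite Y" unfolding Y_def by (rule finite_len_le)
  have "X \<subseteq> Y" unfolding Y_def M_def using X(1) by (auto intro: member_le_sum)
  then have lt: "S - e < sum a Y" using X fY by blast
  have un: "(UNIV :: gen list set) = Y \<union> {w. M < length w}" unfolding Y_def by auto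
  have "S = infsum a Y + infsum a {w. M < length w}"
    unfolding S_def by (subst un, rule infsum_Un_disjoint)
      (auto simp: Y_def intro: summable_on_subset_banach[OF sa'])
  then have "tailF F M = S - sum a Y" using fY by (simp add: tailF_def a_def)
  then have "tailF F M < e" using lt by linarith
  then show ?thesis by blast
qed

lemma tail_ext:
  fixes F :: "gen list \<Rightarrow> complex"
  assumes sa: "(\<lambda>w. norm (F w)) summable_on UNIV"
  shows "(\<Sum>m\<in>{m. length m = M}. \<Sum>\<^sub>\<infinity>w\<in>extn m. norm (F w)) \<le> tailF F M"
proof -
  have fin: "finite {m :: gen list. length m = M}"
    by (rule finite_subset[OF _ finite_len_le[of M]]) auto
  have "(\<Sum>m\<in>{m. length m = M}. \<Sum>\<^sub>\<infinity>w\<in>extn m. norm (F w))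
      = (\<Sum>\<^sub>\<infinity>w\<in>(\<Union>m\<in>{m. length m = M}. extn m). norm (F w))"
  proof (rule sum_infsum[OF fin])
    show "(\<lambda>w. norm (F w)) summable_on extn m" for m
      using sa by (rule summable_on_subset_banach) simp
    show "extn m \<inter> extn m' = {}" if "m \<in> {m. length m = M}" "m' \<in> {m. length m = M}" "m \<noteq> m'" for m m'
      using that by (auto simp: extn_def append_eq_append_conv)
  qed
  also have "\<dots> \<le> tailF F M"
    unfolding tailF_def
    by (rule infsum_mono2) (auto simp: extn_def intro: summable_on_subset_banach[OF sa])
  finally show ?thesis .
qed

lemma sum_if_eq:
  "finite A \<Longrightarrow> (\<Sum>k\<in>A. if a = k \<and> Q then b k else 0) = (if a \<in> A \<and> Q then b a else 0)"
  by (cases Q) (simp_all add: sum.delta)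

theorem proposition3p11:
  fixes f :: "cu \<Rightarrow> complex" and i j :: "gen list"
  assumes "in_A f"
    and "zero_sums_at f (i, j)"
  shows "(\<lambda>t. if t \<in> sym_exp (i, j) then f t else 0) \<in> J"
proof -
  define \<phi> where "\<phi> m = (i @ m, j @ m)" for m
  define F where "F m = f (\<phi> m)" for m
  define h where "h t = (if t \<in> sym_exp (i, j) then f t else 0)" for t
  define g where "g k t = delta (\<phi> k) t - delta (\<phi> (k @ [G1])) t - delta (\<phi> (k @ [G2])) t" for k t
  define W where "W N = {k :: gen list. length k \<le> N}" for N
  define hN where "hN N t = (\<Sum>k\<in>W N. Pfun F k * g k t)" for N t
  define D where "D N m = (if length m \<le> N then 0 else if length m = Suc N then Pfun F m else F m)" for N m
  have inj\<phi>: "inj \<phi>" by (rule injI) (simp add: \<phi>_def)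
  have sym: "sym_exp (i, j) = range \<phi>" by (auto simp: sym_exp_def \<phi>_def)
  have sf: "(\<lambda>t. norm (f t)) summable_on UNIV" using assms(1) by (simp add: in_A_def)
  have sa: "(\<lambda>w. norm (F w)) summable_on UNIV"
  proof -
    have "(\<lambda>t. norm (f t)) summable_on range \<phi>"
      using sf by (rule summable_on_subset_banach) simp
    then show ?thesis using summable_on_reindex[of \<phi> UNIV "\<lambda>t. norm (f t)"] inj\<phi>
      by (simp add: F_def comp_def)
  qed
  have zs: "\<And>n. (\<lambda>l. F (pref n l)) sums 0"
    using assms(2) by (simp add: zero_sums_at_def F_def \<phi>_def)
  have finW: "finite (W N)" for N unfolding W_def by (rule finite_len_le)
  have hA: "in_A h"
    unfolding in_A_def
    by (rule summable_on_comparison_test[OF sf]) (auto simp: h_def)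
  have diff1: "h (\<phi> m) - hN N (\<phi> m) = D N m" for N m
  proof -
    have hm: "h (\<phi> m) = F m" by (simp add: h_def sym F_def)
    have gk: "g k (\<phi> m) = (if k = m then 1 else 0) - (if m = k @ [G1] then 1 else 0)
                - (if m = k @ [G2] then 1 else 0)" for k
      by (simp add: g_def delta_def \<phi>_def)
    have hNm: "hN N (\<phi> m) = (\<Sum>k\<in>W N. if k = m then Pfun F k else 0)
       - (\<Sum>k\<in>W N. if m = k @ [G1] then Pfun F k else 0)
       - (\<Sum>k\<in>W N. if m = k @ [G2] then Pfun F k else 0)"
      unfolding hN_def sum_subtractf[symmetric] by (rule sum.cong) (auto simp: gk)
    have s1: "(\<Sum>k\<in>W N. if k = m then Pfun F k else 0) = (if m \<in> W N then Pfun F m else 0)"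
      using finW by (simp add: sum.delta')
    show ?thesis
    proof (cases m rule: rev_exhaust)
      case Nil
      then show ?thesis using hNm s1 hm by (simp add: D_def W_def Pfun_Nil)
    next
      case (snoc m' x)
      have s2: "(\<Sum>k\<in>W N. if m = k @ [y] then Pfun F k else 0) = (if m' \<in> W N \<and> x = y then Pfun F m' else 0)" for y
        using sum_if_eq[OF finW, of m' "x = y" "Pfun F" N] by (simp add: snoc eq_commute[of m'])
      show ?thesis
        using hNm s1 hm s2 Pfun_snoc[of F m' x] gen.exhaust[of x]
        by (auto simp add: D_def W_def snoc)
    qed
  qed
  have diff0: "h t - hN N t = 0" if "t \<notin> range \<phi>" for N t
  proof -
    have "g k t = 0" for k using that by (auto simp: g_def delta_def)
    moreover have "h t = 0" using that by (simp add: h_def sym)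
    ultimately show ?thesis by (simp add: hN_def)
  qed
  have l1: "l1norm (\<lambda>t. h t - hN N t) = (\<Sum>\<^sub>\<infinity>m. norm (D N m))" for N
  proof -
    have "l1norm (\<lambda>t. h t - hN N t) = (\<Sum>\<^sub>\<infinity>t\<in>range \<phi>. norm (h t - hN N t))"
      unfolding l1norm_def by (rule infsum_cong_neutral) (auto simp: diff0)
    also have "\<dots> = (\<Sum>\<^sub>\<infinity>m. norm (h (\<phi> m) - hN N (\<phi> m)))"
      using infsum_reindex[of \<phi> UNIV "\<lambda>t. norm (h t - hN N t)"] inj\<phi> by (simp add: comp_def)
    finally show ?thesis by (simp add: diff1)
  qed
  have tnn: "0 \<le> tailF F M" for M unfolding tailF_def by (rule infsum_nonneg) simp
  have bound: "(\<Sum>\<^sub>\<infinity>m. norm (D N m)) \<le> 2 * tailF F (Suc N)" for N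
  proof (cases "(\<lambda>m. norm (D N m)) summable_on UNIV")
    case False
    then show ?thesis using tnn by (simp add: infsum_not_exists)
  next
    case True
    define M where "M = Suc N"
    define E where "E m = (\<Sum>\<^sub>\<infinity>w\<in>extn m. norm (F w))" for m
    define B1 where "B1 m = (if length m = M then E m else 0)" for m
    define B2 where "B2 m = (if M < length m then norm (F m) else 0)" for m
    have Enn: "0 \<le> E m" for m unfolding E_def by (rule infsum_nonneg) simp
    have DB: "norm (D N m) \<le> B1 m + B2 m" for m
      using P_bound[OF sa zs, of m] Enn[of m]
      by (auto simp: D_def B1_def B2_def E_def M_def)
    have "(\<Sum>\<^sub>\<infinity>m. norm (D N m)) \<le> tailF F M + tailF F M"
    proof (rule infsum_le_finite_sums[OF True])
      fix Z :: "gen list set" assume Z: "finite Z" "Z \<subseteq> UNIV"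
      have finM: "finite {m :: gen list. length m = M}"
        by (rule finite_subset[OF _ finite_len_le[of M]]) auto
      have "(\<Sum>m\<in>Z. norm (D N m)) \<le> (\<Sum>m\<in>Z. B1 m + B2 m)"
        by (rule sum_mono) (rule DB)
      also have "\<dots> = (\<Sum>m\<in>Z. B1 m) + (\<Sum>m\<in>Z. B2 m)" by (rule sum.distrib)
      also have "(\<Sum>m\<in>Z. B1 m) \<le> tailF F M"
      proof -
        have "(\<Sum>m\<in>Z. B1 m) = (\<Sum>m\<in>{m\<in>Z. length m = M}. E m)"
          using Z(1) by (simp add: B1_def sum.inter_filter)
        also have "\<dots> \<le> (\<Sum>m\<in>{m. length m = M}. E m)"
          by (rule sum_mono2[OF finM]) (auto intro: Enn)
        also have "\<dots> \<le> tailF F M" unfolding E_def by (rule tail_ext[OF sa])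
        finally show ?thesis .
      qed
      also have "(\<Sum>m\<in>Z. B2 m) \<le> tailF F M"
      proof -
        have fz: "finite {m\<in>Z. M < length m}" using Z(1) by simp
        have "(\<Sum>m\<in>Z. B2 m) = (\<Sum>m\<in>{m\<in>Z. M < length m}. norm (F m))"
          using Z(1) by (simp add: B2_def sum.inter_filter)
        also have "\<dots> = (\<Sum>\<^sub>\<infinity>m\<in>{m\<in>Z. M < length m}. norm (F m))"
          using fz by simp
        also have "\<dots> \<le> tailF F M"
          unfolding tailF_def
          by (rule infsum_mono2) (auto intro: summable_on_subset_banach[OF sa])
        finally show ?thesis .
      qed
      finally show "(\<Sum>m\<in>Z. norm (D N m)) \<le> tailF F M + tailF F M" by simp
    qed
    then show ?thesis by (simp add: M_def)
  qed
  have tmono: "tailF F (Suc N) \<le> tailF F N" for N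
    unfolding tailF_def
    by (rule infsum_mono2) (auto intro: summable_on_subset_banach[OF sa])
  show ?thesis
    unfolding J_def h_def[symmetric]
  proof (rule InterI, clarify)
    fix I assume I: "closed_ideal I" "f0 \<in> I"
    have gI: "g k \<in> I" for k
      using g_in_ideal[OF I, of "i @ k" "j @ k"] by (simp add: g_def[abs_def] \<phi>_def)
    have hNI: "hN N \<in> I" for N
      using ideal_sum[OF I(1) finW, where G=g and c="Pfun F"] gI by (simp add: hN_def[abs_def])
    show "h \<in> I"
    proof (rule ideal_closed[OF I(1) hA])
      fix e :: real assume e: "e > 0"
      obtain N where N: "tailF F N < e / 2" using tail_small[OF sa, of "e / 2"] e by auto
      have "l1norm (\<lambda>t. h t - hN N t) \<le> 2 * tailF F (Suc N)" using l1 bound by simp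
      also have "\<dots> < e" using tmono[of N] N by linarith
      finally show "\<exists>h'\<in>I. l1norm (\<lambda>t. h t - h' t) < e" using hNI by blast
    qed
  qed
qed

end
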